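(* There exists a constant $C>0$ such that infinitely many integers $\ell\ge1$ satisfy $$\sum_{i=1}^{\ell-1}i\,q(i)\le C\,\ell\,Q(\ell).$$
   Context: A sign-decorated binary tree is a finite planar rooted tree in which every internal vertex (node) has exactly two ordered children and carries a sign $\oplus$ or $\ominus$; $\mathrm{LIS}(t)$ is the maximal number of leaves in a set of leaves whose pairwise highest common ancestors all carry $\oplus$. Fix $p\in(0,1)$. $T$ is a critical binary Bienaymé–Galton–Watson tree with i.i.d. node signs, $\mathbb P(\oplus)=p$; $q(k)=\mathbb P(\mathrm{LIS}(T)=k)$, $Q(k)=\mathbb P(\mathrm{LIS}(T)\ge k)$. *)

theory Defs
  imports "HOL-Analysis.Analysis" "HOL-Library.Sublist"
begin

text \<open>Sign-decorated binary trees: a leaf, or an internal node carrying a sign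
  (True = plus, False = minus) with an ordered pair (left, right) of subtrees.\<close>
datatype stree = Leaf | Node bool stree stree

text \<open>Vertices are addressed by paths from the root (False = left, True = right).\<close>
fun leaves :: "stree \<Rightarrow> bool list set" where
  "leaves Leaf = {[]}"
| "leaves (Node s l r) = Cons False ` leaves l \<union> Cons True ` leaves r"

fun sign_at :: "stree \<Rightarrow> bool list \<Rightarrow> bool option" where
  "sign_at Leaf w = None"
| "sign_at (Node s l r) [] = Some s"
| "sign_at (Node s l r) (False # w) = sign_at l w"
| "sign_at (Node s l r) (True # w) = sign_at r w"

definition hca :: "bool list \<Rightarrow> bool list \<Rightarrow> bool list" where
  "hca u v = longest_common_prefix u v"

definition plus_leafset :: "stree \<Rightarrow> bool list set \<Rightarrow> bool" where
  "plus_leafset t S \<longleftrightarrow> S \<subseteq> leaves t \<and>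
     (\<forall>u\<in>S. \<forall>v\<in>S. u \<noteq> v \<longrightarrow> sign_at t (hca u v) = Some True)"

definition LIS :: "stree \<Rightarrow> nat" where
  "LIS t = Max (card ` {S. plus_leafset t S})"

fun n_plus :: "stree \<Rightarrow> nat" where
  "n_plus Leaf = 0"
| "n_plus (Node s l r) = (if s then 1 else 0) + n_plus l + n_plus r"

fun n_minus :: "stree \<Rightarrow> nat" where
  "n_minus Leaf = 0"
| "n_minus (Node s l r) = (if s then 0 else 1) + n_minus l + n_minus r"

fun n_vert :: "stree \<Rightarrow> nat" where
  "n_vert Leaf = 1"
| "n_vert (Node s l r) = 1 + n_vert l + n_vert r"

text \<open>Law of the critical binary BGW tree (offspring 0 or 2, each with probability 1/2)
  with i.i.d. signs, P(plus) = p: probability that T equals the finite tree t.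
  (T is a.s. finite, so this point mass function determines its law.)\<close>
definition bgw_prob :: "real \<Rightarrow> stree \<Rightarrow> real" where
  "bgw_prob p t = (1/2) ^ n_vert t * p ^ n_plus t * (1 - p) ^ n_minus t"

definition q :: "real \<Rightarrow> nat \<Rightarrow> real" where
  "q p k = infsum (bgw_prob p) {t. LIS t = k}"

definition Q :: "real \<Rightarrow> nat \<Rightarrow> real" where
  "Q p k = infsum (bgw_prob p) {t. LIS t \<ge> k}"

end

theory Submission
  imports Defs
begin


fun lis :: "stree \<Rightarrow> nat" where
  "lis Leaf = 1"
| "lis (Node s l r) = (if s then lis l + lis r else max (lis l) (lis r))"

lemma hca_Cons: "hca (a#u) (b#v) = (if a = b then a # hca u v else [])"
  by (simp add: hca_def)

lemma finite_leaves: "finite (leaves t)"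
  by (induction t) auto

lemma plus_finite: "plus_leafset t S \<Longrightarrow> finite S"
  unfolding plus_leafset_def using finite_leaves finite_subset by blast

lemma plus_Leaf: "plus_leafset Leaf S \<longleftrightarrow> S \<subseteq> {[]}"
  unfolding plus_leafset_def by auto

lemma plus_Node:
  "plus_leafset (Node s l r) S \<longleftrightarrow> (\<exists>A B. S = Cons False ` A \<union> Cons True ` B \<and>
      plus_leafset l A \<and> plus_leafset r B \<and> (s \<or> A = {} \<or> B = {}))"
proof
  assume H: "plus_leafset (Node s l r) S"
  define A where "A = {u. False # u \<in> S}"
  define B where "B = {u. True # u \<in> S}"
  have sub: "S \<subseteq> Cons False ` leaves l \<union> Cons True ` leaves r"
    using H unfolding plus_leafset_def by simp
  have S: "S = Cons False ` A \<union> Cons True ` B"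
  proof
    show "S \<subseteq> Cons False ` A \<union> Cons True ` B"
    proof
      fix x assume "x \<in> S"
      then obtain b u where "x = b # u" using sub by blast
      then show "x \<in> Cons False ` A \<union> Cons True ` B" using \<open>x \<in> S\<close> A_def B_def by (cases b) auto
    qed
  qed (auto simp: A_def B_def)
  have pa: "sign_at (Node s l r) (hca u v) = Some True" if "u \<in> S" "v \<in> S" "u \<noteq> v" for u v
    using H that unfolding plus_leafset_def by blast
  have "plus_leafset l A"
    unfolding plus_leafset_def
  proof (intro conjI ballI impI)
    show "A \<subseteq> leaves l" using sub A_def by auto
    fix u v assume "u \<in> A" "v \<in> A" "u \<noteq> v"
    then show "sign_at l (hca u v) = Some True" using pa[of "False#u" "False#v"] A_def by (simp add: hca_Cons)
  qed
  moreover have "plus_leafset r B"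
    unfolding plus_leafset_def
  proof (intro conjI ballI impI)
    show "B \<subseteq> leaves r" using sub B_def by auto
    fix u v assume "u \<in> B" "v \<in> B" "u \<noteq> v"
    then show "sign_at r (hca u v) = Some True" using pa[of "True#u" "True#v"] B_def by (simp add: hca_Cons)
  qed
  moreover have "s \<or> A = {} \<or> B = {}"
  proof (rule ccontr)
    assume "\<not> (s \<or> A = {} \<or> B = {})"
    then obtain u v where "u \<in> A" "v \<in> B" "\<not> s" by blast
    then show False using pa[of "False#u" "True#v"] A_def B_def by (simp add: hca_Cons)
  qed
  ultimately show "\<exists>A B. S = Cons False ` A \<union> Cons True ` B \<and>
      plus_leafset l A \<and> plus_leafset r B \<and> (s \<or> A = {} \<or> B = {})" using S by blast
next
  assume "\<exists>A B. S = Cons False ` A \<union> Cons True ` B \<and>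
      plus_leafset l A \<and> plus_leafset r B \<and> (s \<or> A = {} \<or> B = {})"
  then obtain A B where S: "S = Cons False ` A \<union> Cons True ` B" and pA: "plus_leafset l A"
    and pB: "plus_leafset r B" and c: "s \<or> A = {} \<or> B = {}" by blast
  show "plus_leafset (Node s l r) S"
    unfolding plus_leafset_def
  proof (intro conjI ballI impI)
    show "S \<subseteq> leaves (Node s l r)" using S pA pB unfolding plus_leafset_def by auto
    fix u v assume u: "u \<in> S" and v: "v \<in> S" and uv: "u \<noteq> v"
    show "sign_at (Node s l r) (hca u v) = Some True"
    proof -
      have pa: "sign_at l (hca x y) = Some True" if "x \<in> A" "y \<in> A" "x \<noteq> y" for x y
        using pA that unfolding plus_leafset_def by blast
      have pb: "sign_at r (hca x y) = Some True" if "x \<in> B" "y \<in> B" "x \<noteq> y" for x y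
        using pB that unfolding plus_leafset_def by blast
      from u S obtain a u' where u': "u = a # u'" "(a = False \<and> u' \<in> A) \<or> (a = True \<and> u' \<in> B)" by blast
      from v S obtain b v' where v': "v = b # v'" "(b = False \<and> v' \<in> A) \<or> (b = True \<and> v' \<in> B)" by blast
      show ?thesis
      proof (cases "a = b")
        case True
        then have "u' \<noteq> v'" using uv u' v' by simp
        then show ?thesis using u' v' True pa pb by (cases a) (auto simp: hca_Cons)
      next
        case False
        then have "s" using c u' v' by auto
        then show ?thesis using u' v' False by (simp add: hca_Cons)
      qed
    qed
  qed
qed

lemma plus_empty[simp]: "plus_leafset t {}"
  by (simp add: plus_leafset_def)

lemma card_split: "finite A \<Longrightarrow> finite B \<Longrightarrow> card (Cons False ` A \<union> Cons True ` B) = card A + card B"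
  by (subst card_Un_disjoint) (auto simp: card_image)

lemma lis_upper: "plus_leafset t S \<Longrightarrow> card S \<le> lis t"
proof (induction t arbitrary: S)
  case Leaf
  then show ?case by (auto simp: plus_Leaf card_mono[of "{[]}", simplified] intro: card_mono[of "{[]}", simplified])
next
  case (Node s l r)
  then obtain A B where S: "S = Cons False ` A \<union> Cons True ` B" and pA: "plus_leafset l A"
    and pB: "plus_leafset r B" and c: "s \<or> A = {} \<or> B = {}" by (auto simp: plus_Node)
  have cS: "card S = card A + card B" using S card_split plus_finite pA pB by simp
  have "card A \<le> lis l" "card B \<le> lis r" using Node.IH pA pB by auto
  then show ?case using cS c by auto
qed

lemma lis_attained: "\<exists>S. plus_leafset t S \<and> card S = lis t"
proof (induction t)
  case Leaf
  then show ?case by (intro exI[of _ "{[]}"]) (auto simp: plus_Leaf)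
next
  case (Node s l r)
  then obtain A B where pA: "plus_leafset l A" "card A = lis l" and pB: "plus_leafset r B" "card B = lis r" by blast
  show ?case
  proof (cases s)
    case True
    then show ?thesis using pA pB card_split plus_finite
      by (intro exI[of _ "Cons False ` A \<union> Cons True ` B"]) (auto simp: plus_Node)
  next
    case False
    show ?thesis
    proof (cases "lis l \<le> lis r")
      case True
      have "plus_leafset (Node s l r) (Cons False ` {} \<union> Cons True ` B)"
        unfolding plus_Node by (intro exI[of _ "{}"] exI[of _ B]) (simp add: pB)
      moreover have "card (Cons False ` {} \<union> Cons True ` B) = card B"
        using card_split[of "{}" B] plus_finite pB by simp
      ultimately show ?thesis using True pB \<open>\<not> s\<close> by auto
    next
      case F2: False
      have "plus_leafset (Node s l r) (Cons False ` A \<union> Cons True ` {})"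
        unfolding plus_Node by (intro exI[of _ A] exI[of _ "{}"]) (simp add: pA)
      moreover have "card (Cons False ` A \<union> Cons True ` {}) = card A"
        using card_split[of A "{}"] plus_finite pA by simp
      ultimately show ?thesis using F2 pA \<open>\<not> s\<close> by auto
    qed
  qed
qed

lemma LIS_lis: "LIS t = lis t"
proof -
  have fin: "finite {S. plus_leafset t S}"
    by (rule finite_subset[of _ "Pow (leaves t)"]) (auto simp: plus_leafset_def finite_leaves)
  obtain S where S: "plus_leafset t S" "card S = lis t" using lis_attained by blast
  show ?thesis unfolding LIS_def
    by (rule Max_eqI) (use fin S lis_upper in \<open>auto intro: image_eqI[of _ card S]\<close>)
qed

lemma lis_ge1: "lis t \<ge> 1"
  by (induction t) auto



definition w :: "real \<Rightarrow> bool \<Rightarrow> real" where "w p s = (if s then p else 1 - p)"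

lemma bgw_Leaf[simp]: "bgw_prob p Leaf = 1/2"
  by (simp add: bgw_prob_def)

lemma bgw_Node: "bgw_prob p (Node s l r) = 1/2 * w p s * bgw_prob p l * bgw_prob p r"
  by (cases s) (simp_all add: bgw_prob_def w_def power_add algebra_simps)

lemma bgw_nn: "0 \<le> p \<Longrightarrow> p \<le> 1 \<Longrightarrow> bgw_prob p t \<ge> 0"
  by (simp add: bgw_prob_def)

lemma w_nn: "0 \<le> p \<Longrightarrow> p \<le> 1 \<Longrightarrow> w p s \<ge> 0"
  by (simp add: w_def)

definition nd :: "bool \<Rightarrow> stree \<times> stree \<Rightarrow> stree" where "nd s = (\<lambda>(l,r). Node s l r)"
definition NS :: "bool \<Rightarrow> stree set \<Rightarrow> stree set \<Rightarrow> stree set" where "NS s A B = nd s ` (A \<times> B)"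

lemma inj_nd: "inj_on (nd s) X"
  by (auto simp: inj_on_def nd_def)

lemma Node_in_NS[simp]: "Node s l r \<in> NS s' A B \<longleftrightarrow> s = s' \<and> l \<in> A \<and> r \<in> B"
  by (auto simp: NS_def nd_def)

lemma Leaf_notin_NS[simp]: "Leaf \<notin> NS s A B"
  by (auto simp: NS_def nd_def)

lemma NS_Int: "NS s A B \<inter> NS s' A' B' = (if s = s' then NS s (A \<inter> A') (B \<inter> B') else {})"
  by (auto simp: NS_def nd_def)

lemma NS_empty: "NS s {} B = {}" "NS s A {} = {}"
  by (auto simp: NS_def)

fun lt :: "stree \<Rightarrow> stree" where "lt Leaf = Leaf" | "lt (Node s l r) = l"
fun rt :: "stree \<Rightarrow> stree" where "rt Leaf = Leaf" | "rt (Node s l r) = r"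

lemma sum_NS:
  assumes "finite A" "finite B"
  shows "sum (bgw_prob p) (NS s A B) = 1/2 * w p s * sum (bgw_prob p) A * sum (bgw_prob p) B"
proof -
  have "sum (bgw_prob p) (NS s A B) = sum (bgw_prob p \<circ> nd s) (A \<times> B)"
    unfolding NS_def by (rule sum.reindex[OF inj_nd])
  also have "\<dots> = (\<Sum>(l,r)\<in>A \<times> B. 1/2 * w p s * (bgw_prob p l * bgw_prob p r))"
    by (intro sum.cong) (auto simp: nd_def bgw_Node)
  also have "\<dots> = 1/2 * w p s * (\<Sum>(l,r)\<in>A \<times> B. bgw_prob p l * bgw_prob p r)"
    by (simp add: sum_distrib_left case_prod_unfold)
  also have "(\<Sum>(l,r)\<in>A \<times> B. bgw_prob p l * bgw_prob p r) = sum (bgw_prob p) A * sum (bgw_prob p) B"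
    by (simp add: sum_product sum.cartesian_product)
  finally show ?thesis by simp
qed

lemma finsum_le1:
  assumes p0: "0 \<le> p" and p1: "p \<le> 1"
  shows "sum (bgw_prob p) F \<le> 1"
proof (cases "finite F")
  case False then show ?thesis by simp
next
  case True
  have "\<forall>F. finite F \<longrightarrow> (\<forall>t\<in>F. n_vert t \<le> n) \<longrightarrow> sum (bgw_prob p) F \<le> 1" for n
  proof (induction n)
    case 0
    have "n_vert t \<ge> 1" for t by (cases t) auto
    then show ?case by (metis empty_iff not_one_le_zero sum.empty zero_le_one le_zero_eq subsetI subset_empty)
  next
    case (Suc n)
    show ?case
    proof (intro allI impI)
      fix F :: "stree set" assume fin: "finite F" and bd: "\<forall>t\<in>F. n_vert t \<le> Suc n"
      define Fl where "Fl = lt ` (F - {Leaf})"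
      define Fr where "Fr = rt ` (F - {Leaf})"
      have finl: "finite Fl" "finite Fr" using fin by (auto simp: Fl_def Fr_def)
      have bl: "\<forall>t\<in>Fl. n_vert t \<le> n" "\<forall>t\<in>Fr. n_vert t \<le> n"
        unfolding Fl_def Fr_def
      proof -
        show "\<forall>t\<in>lt ` (F - {Leaf}). n_vert t \<le> n"
        proof
          fix t assume "t \<in> lt ` (F - {Leaf})"
          then obtain u where u: "u \<in> F" "u \<noteq> Leaf" "t = lt u" by auto
          then obtain s l r where "u = Node s l r" by (cases u) auto
          then show "n_vert t \<le> n" using u bd by force
        qed
        show "\<forall>t\<in>rt ` (F - {Leaf}). n_vert t \<le> n"
        proof
          fix t assume "t \<in> rt ` (F - {Leaf})"
          then obtain u where u: "u \<in> F" "u \<noteq> Leaf" "t = rt u" by auto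
          then obtain s l r where "u = Node s l r" by (cases u) auto
          then show "n_vert t \<le> n" using u bd by force
        qed
      qed
      have IHl: "sum (bgw_prob p) Fl \<le> 1" and IHr: "sum (bgw_prob p) Fr \<le> 1"
        using Suc.IH finl bl by auto
      have nnl: "sum (bgw_prob p) Fl \<ge> 0" "sum (bgw_prob p) Fr \<ge> 0"
        using bgw_nn[OF p0 p1] by (auto intro: sum_nonneg)
      have sub: "F \<subseteq> insert Leaf (NS True Fl Fr \<union> NS False Fl Fr)"
      proof
        fix t assume "t \<in> F"
        show "t \<in> insert Leaf (NS True Fl Fr \<union> NS False Fl Fr)"
        proof (cases t)
          case Leaf then show ?thesis by simp
        next
          case (Node s l r)
          then have "l \<in> Fl" "r \<in> Fr" using \<open>t \<in> F\<close> unfolding Fl_def Fr_def by (auto intro!: image_eqI[of _ _ t])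
          then show ?thesis using Node by (cases s) auto
        qed
      qed
      have finNS: "finite (NS s Fl Fr)" for s using finl by (simp add: NS_def)
      have "sum (bgw_prob p) F \<le> sum (bgw_prob p) (insert Leaf (NS True Fl Fr \<union> NS False Fl Fr))"
        using sub finNS bgw_nn[OF p0 p1] by (intro sum_mono2) auto
      also have "\<dots> = 1/2 + (sum (bgw_prob p) (NS True Fl Fr) + sum (bgw_prob p) (NS False Fl Fr))"
        using finNS by (simp add: sum.union_disjoint NS_Int)
      also have "\<dots> = 1/2 + (1/2 * w p True + 1/2 * w p False) * (sum (bgw_prob p) Fl * sum (bgw_prob p) Fr)"
        using finl by (simp add: sum_NS algebra_simps)
      also have "\<dots> \<le> 1/2 + (1/2 * w p True + 1/2 * w p False) * 1"
        using IHl IHr nnl w_nn[OF p0 p1] by (intro add_left_mono mult_left_mono mult_le_one) auto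
      also have "\<dots> = 1" by (simp add: w_def field_simps)
      finally show "sum (bgw_prob p) F \<le> 1" .
    qed
  qed
  moreover obtain n where "\<forall>t\<in>F. n_vert t \<le> n"
    using True by (metis finite_nat_set_iff_bounded_le finite_imageI imageI)
  ultimately show ?thesis using True by blast
qed

context
  fixes p :: real
  assumes p0: "0 \<le> p" and p1: "p \<le> 1"
begin

lemma bgw_summable: "bgw_prob p summable_on A"
proof -
  have "bgw_prob p summable_on UNIV"
    using bgw_nn[OF p0 p1] finsum_le1[OF p0 p1]
    by (intro nonneg_bounded_partial_sums_imp_summable_on[where C=1]) (auto intro: always_eventually)
  then show ?thesis by (rule summable_on_subset_banach) simp
qed

lemma prod_summable: "(\<lambda>(l,r). bgw_prob p l * bgw_prob p r) summable_on A"
proof -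
  have "sum (\<lambda>(l,r). bgw_prob p l * bgw_prob p r) X \<le> 1" for X
  proof (cases "finite X")
    case False then show ?thesis by simp
  next
    case True
    have "sum (\<lambda>(l,r). bgw_prob p l * bgw_prob p r) X \<le> sum (\<lambda>(l,r). bgw_prob p l * bgw_prob p r) (fst ` X \<times> snd ` X)"
      using True bgw_nn[OF p0 p1] by (intro sum_mono2) (auto intro: mult_nonneg_nonneg rev_image_eqI)
    also have "\<dots> = sum (bgw_prob p) (fst ` X) * sum (bgw_prob p) (snd ` X)"
      by (simp add: sum_product sum.cartesian_product)
    also have "\<dots> \<le> 1 * 1"
      using finsum_le1[OF p0 p1] bgw_nn[OF p0 p1] by (intro mult_mono) (auto intro: sum_nonneg)
    finally show ?thesis by simp
  qed
  then have "(\<lambda>(l,r). bgw_prob p l * bgw_prob p r) summable_on UNIV"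
    using bgw_nn[OF p0 p1]
    by (intro nonneg_bounded_partial_sums_imp_summable_on[where C=1]) (auto intro: always_eventually)
  then show ?thesis by (rule summable_on_subset_banach) simp
qed

lemma mu_NS: "infsum (bgw_prob p) (NS s A B) = 1/2 * w p s * infsum (bgw_prob p) A * infsum (bgw_prob p) B"
proof -
  have "infsum (bgw_prob p) (NS s A B) = infsum (bgw_prob p \<circ> nd s) (A \<times> B)"
    unfolding NS_def by (rule infsum_reindex[OF inj_nd])
  also have "\<dots> = infsum (\<lambda>x. 1/2 * w p s * (\<lambda>(l,r). bgw_prob p l * bgw_prob p r) x) (A \<times> B)"
    by (intro infsum_cong) (auto simp: nd_def bgw_Node)
  also have "\<dots> = 1/2 * w p s * infsum (\<lambda>(l,r). bgw_prob p l * bgw_prob p r) (A \<times> B)"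
    by (rule infsum_cmult_right')
  also have "infsum (\<lambda>(l,r). bgw_prob p l * bgw_prob p r) (A \<times> B)
      = infsum (\<lambda>l. infsum (\<lambda>r. bgw_prob p l * bgw_prob p r) B) A"
    using infsum_Sigma'_banach[of "\<lambda>l r. bgw_prob p l * bgw_prob p r" A "\<lambda>_. B"] prod_summable
    by simp
  also have "\<dots> = infsum (\<lambda>l. bgw_prob p l * infsum (bgw_prob p) B) A"
    by (intro infsum_cong infsum_cmult_right')
  also have "\<dots> = infsum (bgw_prob p) A * infsum (bgw_prob p) B"
    by (rule infsum_cmult_left')
  finally show ?thesis by simp
qed

lemma mu_Un: "A \<inter> B = {} \<Longrightarrow> infsum (bgw_prob p) (A \<union> B) = infsum (bgw_prob p) A + infsum (bgw_prob p) B"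
  by (rule infsum_Un_disjoint) (auto intro: bgw_summable)

lemma mu_nonneg: "infsum (bgw_prob p) A \<ge> 0"
  using bgw_nn[OF p0 p1] by (intro infsum_nonneg) auto

lemma mu_mono: "A \<subseteq> B \<Longrightarrow> infsum (bgw_prob p) A \<le> infsum (bgw_prob p) B"
  using bgw_nn[OF p0 p1] by (intro infsum_mono_neutral bgw_summable) auto

lemma mu_single: "infsum (bgw_prob p) {t} = bgw_prob p t"
  by simp

lemma mu_UN: "finite J \<Longrightarrow> (\<And>i j. i \<in> J \<Longrightarrow> j \<in> J \<Longrightarrow> i \<noteq> j \<Longrightarrow> A i \<inter> A j = {}) \<Longrightarrow>
   infsum (bgw_prob p) (\<Union>j\<in>J. A j) = (\<Sum>j\<in>J. infsum (bgw_prob p) (A j))"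
proof (induction J rule: finite_induct)
  case empty then show ?case by simp
next
  case (insert x F)
  have "A x \<inter> (\<Union>j\<in>F. A j) = {}" using insert by blast
  then show ?case using insert by (simp add: mu_Un)
qed

lemma mu_total: "infsum (bgw_prob p) UNIV = 1"
proof -
  define Z where "Z = infsum (bgw_prob p) UNIV"
  have U: "UNIV = {Leaf} \<union> (NS True UNIV UNIV \<union> NS False UNIV UNIV)"
  proof -
    have "t \<in> {Leaf} \<union> (NS True UNIV UNIV \<union> NS False UNIV UNIV)" for t
      by (cases t) auto
    then show ?thesis by blast
  qed
  have "Z = infsum (bgw_prob p) {Leaf} + (infsum (bgw_prob p) (NS True UNIV UNIV) + infsum (bgw_prob p) (NS False UNIV UNIV))"
  proof -
    have "infsum (bgw_prob p) ({Leaf} \<union> (NS True UNIV UNIV \<union> NS False UNIV UNIV))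
      = infsum (bgw_prob p) {Leaf} + infsum (bgw_prob p) (NS True UNIV UNIV \<union> NS False UNIV UNIV)"
      by (rule mu_Un) auto
    moreover have "infsum (bgw_prob p) (NS True UNIV UNIV \<union> NS False UNIV UNIV)
      = infsum (bgw_prob p) (NS True UNIV UNIV) + infsum (bgw_prob p) (NS False UNIV UNIV)"
      by (rule mu_Un) (simp add: NS_Int)
    ultimately show ?thesis unfolding Z_def using U by metis
  qed
  also have "\<dots> = 1/2 + (1/2 * p * Z * Z + 1/2 * (1-p) * Z * Z)"
    by (simp add: mu_NS w_def Z_def)
  also have "\<dots> = 1/2 + 1/2 * Z * Z" by (simp add: field_simps)
  finally have "Z = 1/2 + 1/2 * Z * Z" .
  then have "(Z - 1)^2 = 0" by (simp add: power2_eq_square algebra_simps)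
  then show ?thesis unfolding Z_def by simp
qed

definition QQ :: "nat \<Rightarrow> real" where "QQ k = infsum (bgw_prob p) {t. k \<le> lis t}"
definition qq :: "nat \<Rightarrow> real" where "qq k = infsum (bgw_prob p) {t. lis t = k}"

lemma QQ1: "QQ 1 = 1"
proof -
  have "{t. 1 \<le> lis t} = UNIV" using lis_ge1 by auto
  then show ?thesis unfolding QQ_def using mu_total by simp
qed

lemma qq_QQ: "qq k = QQ k - QQ (Suc k)"
proof -
  have "{t. k \<le> lis t} = {t. lis t = k} \<union> {t. Suc k \<le> lis t}" by auto
  moreover have "{t. lis t = k} \<inter> {t. Suc k \<le> lis t} = {}" by auto
  ultimately show ?thesis unfolding QQ_def qq_def using mu_Un by simp
qed

lemma QQ_dec: "QQ (Suc k) \<le> QQ k"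
  unfolding QQ_def by (rule mu_mono) auto

lemma QQ_compl: "infsum (bgw_prob p) {t. lis t < k} = 1 - QQ k"
proof -
  have "UNIV = {t. lis t < k} \<union> {t. k \<le> lis t}" by auto
  moreover have "{t. lis t < k} \<inter> {t. k \<le> lis t} = {}" by auto
  ultimately have "1 = infsum (bgw_prob p) {t. lis t < k} + QQ k"
    unfolding QQ_def using mu_Un mu_total by metis
  then show ?thesis by simp
qed

lemma sum_qq: "k \<ge> 1 \<Longrightarrow> (\<Sum>j\<in>{1..<k}. qq j) = 1 - QQ k"
proof -
  assume k: "k \<ge> 1"
  have "(\<Sum>j\<in>{1..<k}. qq j) = - (\<Sum>j\<in>{1..<k}. QQ (Suc j) - QQ j)"
    by (simp add: qq_QQ sum_negf[symmetric])
  also have "\<dots> = - (QQ k - QQ 1)" using sum_Suc_diff'[OF k, of QQ] by simp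
  finally show ?thesis using QQ1 by simp
qed

lemma identity:
  assumes k: "k \<ge> 2"
  shows "p * (\<Sum>j\<in>{1..<k}. qq j * (QQ (k-j) - QQ k)) = (QQ k)^2"
proof -
  define X1 where "X1 = NS True {l. k \<le> lis l} UNIV"
  define Y where "Y j = NS True {l. lis l = j} {r. k - j \<le> lis r}" for j
  define X2 where "X2 = (\<Union>j\<in>{1..<k}. Y j)"
  define X3 where "X3 = NS False {l. k \<le> lis l} UNIV"
  define X4 where "X4 = NS False {l. lis l < k} {r. k \<le> lis r}"
  have dec: "{t. k \<le> lis t} = (X1 \<union> X2) \<union> (X3 \<union> X4)"
  proof (intro set_eqI iffI)
    fix t assume "t \<in> {t. k \<le> lis t}"
    then have kt: "k \<le> lis t" by simp
    show "t \<in> (X1 \<union> X2) \<union> (X3 \<union> X4)"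
    proof (cases t)
      case Leaf then show ?thesis using kt k by simp
    next
      case (Node s l r)
      show ?thesis
      proof (cases s)
        case True
        show ?thesis
        proof (cases "k \<le> lis l")
          case True
          then show ?thesis using Node \<open>s\<close> by (simp add: X1_def)
        next
          case False
          have "lis l \<in> {1..<k}" using False lis_ge1[of l] by simp
          moreover have "t \<in> Y (lis l)" using Node \<open>s\<close> kt by (simp add: Y_def)
          ultimately show ?thesis unfolding X2_def by blast
        qed
      next
        case False
        then show ?thesis using Node kt by (cases "k \<le> lis l") (auto simp: X3_def X4_def)
      qed
    qed
  next
    fix t assume "t \<in> (X1 \<union> X2) \<union> (X3 \<union> X4)"
    then show "t \<in> {t. k \<le> lis t}"
      unfolding X1_def X2_def X3_def X4_def Y_def NS_def nd_def by auto
  qed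
  have sT: "X1 \<union> X2 \<subseteq> NS True UNIV UNIV" unfolding X1_def X2_def Y_def NS_def by auto
  have sF: "X3 \<union> X4 \<subseteq> NS False UNIV UNIV" unfolding X3_def X4_def NS_def by auto
  have d1: "(X1 \<union> X2) \<inter> (X3 \<union> X4) = {}" 
  proof -
    have "NS True UNIV UNIV \<inter> NS False UNIV UNIV = {}" by (simp add: NS_Int)
    then show ?thesis using sT sF by blast
  qed
  have d2': "X1 \<inter> Y j = {}" if "j < k" for j
  proof -
    have "{l. k \<le> lis l} \<inter> {l. lis l = j} = {}" using that by auto
    then show ?thesis unfolding X1_def Y_def by (simp add: NS_Int NS_empty)
  qed
  have d2: "X1 \<inter> X2 = {}" unfolding X2_def using d2' by fastforce
  have d3: "X3 \<inter> X4 = {}"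
  proof -
    have "{l. k \<le> lis l} \<inter> {l. lis l < k} = {}" by auto
    then show ?thesis unfolding X3_def X4_def by (simp add: NS_Int NS_empty)
  qed
  have dY: "Y i \<inter> Y j = {}" if "i \<noteq> j" for i j
  proof -
    have "{l. lis l = i} \<inter> {l. lis l = j} = {}" using that by auto
    then show ?thesis unfolding Y_def by (simp add: NS_Int NS_empty)
  qed
  have m1: "infsum (bgw_prob p) X1 = 1/2 * p * QQ k"
    unfolding X1_def by (simp add: mu_NS w_def QQ_def mu_total)
  have m2: "infsum (bgw_prob p) X2 = (\<Sum>j\<in>{1..<k}. 1/2 * p * (qq j * QQ (k-j)))"
    unfolding X2_def using dY by (subst mu_UN) (auto simp: Y_def mu_NS w_def QQ_def qq_def mult.assoc)
  have m3: "infsum (bgw_prob p) X3 = 1/2 * (1-p) * QQ k"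
    unfolding X3_def by (simp add: mu_NS w_def QQ_def mu_total)
  have m4: "infsum (bgw_prob p) X4 = 1/2 * (1-p) * (1 - QQ k) * QQ k"
    unfolding X4_def by (simp add: mu_NS w_def QQ_def QQ_compl[unfolded QQ_def])
  define S1 where "S1 = (\<Sum>j\<in>{1..<k}. qq j * QQ (k-j))"
  have E: "QQ k = 1/2 * p * QQ k + 1/2 * p * S1 + 1/2 * (1-p) * QQ k + 1/2 * (1-p) * (1 - QQ k) * QQ k"
  proof -
    have "QQ k = infsum (bgw_prob p) X1 + infsum (bgw_prob p) X2 + (infsum (bgw_prob p) X3 + infsum (bgw_prob p) X4)"
      unfolding QQ_def dec using d1 d2 d3 by (simp add: mu_Un)
    moreover have "(\<Sum>j\<in>{1..<k}. 1/2 * p * (qq j * QQ (k-j))) = 1/2 * p * S1"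
      unfolding S1_def by (simp add: sum_distrib_left)
    ultimately show ?thesis using m1 m2 m3 m4 by linarith
  qed
  have "(\<Sum>j\<in>{1..<k}. qq j * (QQ (k-j) - QQ k)) = S1 - (\<Sum>j\<in>{1..<k}. qq j) * QQ k"
    unfolding S1_def by (simp add: right_diff_distrib sum_subtractf sum_distrib_right)
  also have "\<dots> = S1 - (1 - QQ k) * QQ k" using sum_qq k by simp
  finally have "(\<Sum>j\<in>{1..<k}. qq j * (QQ (k-j) - QQ k)) = S1 - (1 - QQ k) * QQ k" .
  then show ?thesis using E by (simp add: power2_eq_square) algebra
qed

fun comb :: "nat \<Rightarrow> stree" where "comb 0 = Leaf" | "comb (Suc n) = Node True Leaf (comb n)"

lemma lis_comb: "lis (comb n) = Suc n"
  by (induction n) auto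

lemma QQ_pos:
  assumes "0 < p" "p < 1"
  shows "QQ k > 0"
proof -
  have "bgw_prob p (comb k) > 0" using assms by (simp add: bgw_prob_def)
  also have "bgw_prob p (comb k) = infsum (bgw_prob p) {comb k}" by simp
  also have "\<dots> \<le> QQ k" unfolding QQ_def by (rule mu_mono) (auto simp: lis_comb)
  finally show ?thesis .
qed

end



lemma window:
  fixes D :: "nat \<Rightarrow> real"
  assumes mono: "\<And>m n. m \<le> n \<Longrightarrow> D m \<le> D n" and jM: "j \<le> M"
  shows "real j * (D (4*M) - D (2*M)) \<le> (\<Sum>m<3*M. D (2*M+1+m) - D (2*M+1+m-j))"
proof -
  have e1: "D (2*M+1+m) - D (2*M+1+m-j) = (\<Sum>i<j. D (2*M+1+m-i) - D (2*M+1+m - Suc i))" for m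
    using sum_lessThan_telescope'[of "\<lambda>i. D (2*M+1+m-i)" j] by simp
  have e2: "(\<Sum>m<3*M. D (2*M+1+m-i) - D (2*M+1+m - Suc i)) = D (2*M-i+3*M) - D (2*M-i)" if "i < j" for i
  proof -
    have "(\<Sum>m<3*M. D (2*M+1+m-i) - D (2*M+1+m - Suc i)) = (\<Sum>m<3*M. D (2*M-i + Suc m) - D (2*M-i+m))"
      using that jM by (intro sum.cong) (auto simp: algebra_simps Suc_diff_le)
    also have "\<dots> = D (2*M-i+3*M) - D (2*M-i)"
      using sum_lessThan_telescope[of "\<lambda>m. D (2*M-i+m)" "3*M"] by simp
    finally show ?thesis .
  qed
  have "(\<Sum>m<3*M. D (2*M+1+m) - D (2*M+1+m-j)) = (\<Sum>m<3*M. \<Sum>i<j. D (2*M+1+m-i) - D (2*M+1+m - Suc i))"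
    using e1 by simp
  also have "\<dots> = (\<Sum>i<j. \<Sum>m<3*M. D (2*M+1+m-i) - D (2*M+1+m - Suc i))"
    by (rule sum.swap)
  also have "\<dots> = (\<Sum>i<j. D (2*M-i+3*M) - D (2*M-i))"
    using e2 by simp
  also have "\<dots> \<ge> (\<Sum>i<j. D (4*M) - D (2*M))"
  proof (rule sum_mono)
    fix i assume "i \<in> {..<j}"
    then have "D (4*M) \<le> D (2*M-i+3*M)" "D (2*M-i) \<le> D (2*M)" using jM by (auto intro!: mono)
    then show "D (4*M) - D (2*M) \<le> D (2*M-i+3*M) - D (2*M-i)" by simp
  qed
  finally show ?thesis by simp
qed

lemma analysis:
  fixes Q :: "nat \<Rightarrow> real" and p :: real
  assumes p: "0 < p" and dec: "\<And>k. Q (Suc k) \<le> Q k" and pos: "\<And>k. Q k > 0"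
    and H: "\<And>k. k \<ge> 2 \<Longrightarrow> p * (\<Sum>j\<in>{1..<k}. (Q j - Q (Suc j)) * (Q (k-j) - Q k)) \<le> (Q k)^2"
  shows "\<exists>C>0. infinite {l::nat. l \<ge> 1 \<and> (\<Sum>i=1..<l. real i * (Q i - Q (Suc i))) \<le> C * real l * Q l}"
proof -
  have mono: "Q n \<le> Q m" if "m \<le> n" for m n
    using decseq_SucI[of Q, OF dec] that by (simp add: decseq_def)
  define D where "D k = 1 / Q k" for k
  have Dmono: "D m \<le> D n" if "m \<le> n" for m n
    unfolding D_def using mono[OF that] pos by (simp add: frac_le)
  have qnn: "Q j - Q (Suc j) \<ge> 0" for j using dec[of j] by simp
  have star: "p * (\<Sum>j\<in>{1..<k}. (Q j - Q (Suc j)) * (D k - D (k-j))) \<le> 1" if k2: "k \<ge> 2" for k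
  proof -
    have tm: "(Q k)^2 * ((Q j - Q (Suc j)) * (D k - D (k-j))) \<le> (Q j - Q (Suc j)) * (Q (k-j) - Q k)" for j
    proof -
      have eq: "Q (k-j) - Q k = Q k * Q (k-j) * (D k - D (k-j))"
        unfolding D_def using pos[of k] pos[of "k-j"] by (simp add: field_simps)
      have x0: "D k - D (k-j) \<ge> 0" using Dmono[of "k-j" k] by simp
      have "Q k * Q k * (D k - D (k-j)) \<le> Q k * Q (k-j) * (D k - D (k-j))"
        using mono[of "k-j" k] pos[of k] x0 by (intro mult_right_mono mult_left_mono) auto
      then have "(Q k)^2 * (D k - D (k-j)) \<le> Q (k-j) - Q k" using eq by (simp add: power2_eq_square)
      then show ?thesis using qnn[of j]
        by (metis (no_types, lifting) mult.left_commute mult_left_mono)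
    qed
    have "p * ((Q k)^2 * (\<Sum>j\<in>{1..<k}. (Q j - Q (Suc j)) * (D k - D (k-j))))
        \<le> p * (\<Sum>j\<in>{1..<k}. (Q j - Q (Suc j)) * (Q (k-j) - Q k))"
      using p tm by (intro mult_left_mono) (auto simp: sum_distrib_left intro!: sum_mono)
    also have "\<dots> \<le> (Q k)^2" using H[OF k2] .
    finally have "(Q k)^2 * (p * (\<Sum>j\<in>{1..<k}. (Q j - Q (Suc j)) * (D k - D (k-j)))) \<le> (Q k)^2 * 1"
      by (simp add: algebra_simps)
    then show ?thesis using pos[of k] by (simp add: mult_le_cancel_left)
  qed
  have stepB: "p * (\<Sum>j\<in>{1..M}. real j * (Q j - Q (Suc j))) * (D (4*M) - D (2*M)) \<le> 3 * real M" for M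
  proof -
    define T where "T k j = (Q j - Q (Suc j)) * (D k - D (k-j))" for k j
    have Tnn: "T k j \<ge> 0" for k j unfolding T_def using qnn Dmono[of "k-j" k] by simp
    have a: "p * (\<Sum>j\<in>{1..M}. T (2*M+1+m) j) \<le> 1" for m
    proof -
      have "(\<Sum>j\<in>{1..M}. T (2*M+1+m) j) \<le> (\<Sum>j\<in>{1..<2*M+1+m}. T (2*M+1+m) j)"
        using Tnn by (intro sum_mono2) auto
      then have "p * (\<Sum>j\<in>{1..M}. T (2*M+1+m) j) \<le> p * (\<Sum>j\<in>{1..<2*M+1+m}. T (2*M+1+m) j)"
        using p by simp
      also have "\<dots> \<le> 1" using star[of "2*M+1+m"] unfolding T_def
        by (cases M) auto
      finally show ?thesis .
    qed
    have "p * (\<Sum>m<3*M. \<Sum>j\<in>{1..M}. T (2*M+1+m) j) \<le> (\<Sum>m<3*M. (1::real))"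
      unfolding sum_distrib_left[of p "\<lambda>m. \<Sum>j\<in>{1..M}. T (2*M+1+m) j"] using a by (intro sum_mono) auto
    also have "\<dots> = 3 * real M" by simp
    finally have b: "p * (\<Sum>j\<in>{1..M}. \<Sum>m<3*M. T (2*M+1+m) j) \<le> 3 * real M"
      by (subst sum.swap) simp
    have c: "real j * (Q j - Q (Suc j)) * (D (4*M) - D (2*M)) \<le> (\<Sum>m<3*M. T (2*M+1+m) j)"
      if "j \<in> {1..M}" for j
    proof -
      have "real j * (D (4*M) - D (2*M)) \<le> (\<Sum>m<3*M. D (2*M+1+m) - D (2*M+1+m-j))"
        using window[of D j M] Dmono that by auto
      then have "(Q j - Q (Suc j)) * (real j * (D (4*M) - D (2*M))) \<le> (Q j - Q (Suc j)) * (\<Sum>m<3*M. D (2*M+1+m) - D (2*M+1+m-j))"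
        using qnn by (intro mult_left_mono) auto
      then show ?thesis unfolding T_def sum_distrib_left[symmetric] by (simp add: algebra_simps)
    qed
    have "p * (\<Sum>j\<in>{1..M}. real j * (Q j - Q (Suc j))) * (D (4*M) - D (2*M))
        = p * (\<Sum>j\<in>{1..M}. real j * (Q j - Q (Suc j)) * (D (4*M) - D (2*M)))"
      by (simp add: sum_distrib_right mult.assoc)
    also have "\<dots> \<le> p * (\<Sum>j\<in>{1..M}. \<Sum>m<3*M. T (2*M+1+m) j)"
      using p c by (intro mult_left_mono sum_mono) auto
    finally show ?thesis using b by linarith
  qed
  define B where "B l = (\<Sum>i=1..<l. real i * (Q i - Q (Suc i)))" for l
  define F where "F l = (\<Sum>i=1..<l. Q i)" for l
  have BF: "B l \<le> F l" if "l \<ge> 1" for l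
  proof -
    have "B l + real (l-1) * Q l = F l" using that
    proof (induction l rule: dec_induct)
      case base then show ?case by (simp add: B_def F_def)
    next
      case (step n)
      have "B (Suc n) = B n + real n * (Q n - Q (Suc n))" unfolding B_def using step.hyps by simp
      moreover have "F (Suc n) = F n + Q n" unfolding F_def using step.hyps by simp
      ultimately show ?case using step.IH step.hyps by (simp add: algebra_simps of_nat_diff)
    qed
    moreover have "real (l-1) * Q l \<ge> 0" using pos[of l] by simp
    ultimately show ?thesis by linarith
  qed
  define C :: real where "C = 12 / p + 12"
  have C12: "C \<ge> 12" and pC: "p * C \<ge> 12" using p by (auto simp: C_def field_simps)
  show ?thesis
  proof (rule exI[of _ C], intro conjI)
    show "C > 0" using C12 by simp
    show "infinite {l::nat. l \<ge> 1 \<and> (\<Sum>i=1..<l. real i * (Q i - Q (Suc i))) \<le> C * real l * Q l}"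
    proof
      define S where "S = {l::nat. l \<ge> 1 \<and> (\<Sum>i=1..<l. real i * (Q i - Q (Suc i))) \<le> C * real l * Q l}"
      assume fin: "finite {l::nat. l \<ge> 1 \<and> (\<Sum>i=1..<l. real i * (Q i - Q (Suc i))) \<le> C * real l * Q l}"
      then have "finite S" unfolding S_def .
      then obtain l0 where l0: "\<forall>l\<in>S. l \<le> l0"
        unfolding finite_nat_set_iff_bounded_le by (elim exE)
      have hyp: "B l > C * real l * Q l" if "l > l0" "l \<ge> 1" for l
      proof (rule ccontr)
        assume "\<not> B l > C * real l * Q l"
        then have "l \<in> S" unfolding S_def B_def using that by simp
        then show False using l0 that by auto
      qed
      have doub: "Q (2*M) \<le> 5/4 * Q (4*M)" if "M \<ge> l0" "M \<ge> 1" for M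
      proof (cases "D (4*M) \<le> D (2*M)")
        case True
        then show ?thesis unfolding D_def using pos[of "2*M"] pos[of "4*M"] by (simp add: field_simps)
      next
        case False
        have BM: "B (M+1) = (\<Sum>j\<in>{1..M}. real j * (Q j - Q (Suc j)))"
          unfolding B_def by (intro sum.cong) auto
        have h: "B (M+1) > C * real (M+1) * Q (M+1)" using hyp[of "M+1"] that by simp
        have "Q (M+1) \<ge> Q (2*M)" using mono that by simp
        then have "C * real (M+1) * Q (M+1) \<ge> C * real M * Q (2*M)"
          using C12 pos[of "2*M"] by (intro mult_mono) auto
        with h have h2: "B (M+1) > C * real M * Q (2*M)" by linarith
        have "p * (C * real M * Q (2*M)) * (D (4*M) - D (2*M)) \<le> p * B (M+1) * (D (4*M) - D (2*M))"
          using h2 False p by (intro mult_right_mono mult_left_mono) auto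
        also have "\<dots> \<le> 3 * real M" using stepB[of M] BM by simp
        finally have X: "p * (C * real M * Q (2*M)) * (D (4*M) - D (2*M)) \<le> 3 * real M" .
        have "p * (C * real M * Q (2*M)) * (D (4*M) - D (2*M)) = (p * C) * real M * (Q (2*M) * D (4*M) - 1)"
          unfolding D_def using pos[of "2*M"] by (simp add: algebra_simps)
        with X have "(p * C) * real M * (Q (2*M) * D (4*M) - 1) \<le> 3 * real M" by linarith
        moreover have "(p * C) * real M * (Q (2*M) * D (4*M) - 1) \<ge> 12 * real M * (Q (2*M) * D (4*M) - 1)"
        proof -
          have "Q (2*M) * D (4*M) - 1 \<ge> 0" using False pos[of "2*M"] unfolding D_def
            by (simp add: field_simps)
          then show ?thesis using pC by (intro mult_right_mono) auto
        qed
        ultimately have "12 * real M * (Q (2*M) * D (4*M) - 1) \<le> 3 * real M" by linarith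
        then have "4 * (Q (2*M) * D (4*M) - 1) \<le> 1" using that by simp
        then show ?thesis unfolding D_def using pos[of "4*M"] by (simp add: field_simps)
      qed
      define M0 where "M0 = max l0 1 + 1"
      define L where "L n = 2 * (2^n * M0)" for n :: nat
      have LSuc: "L (Suc n) = 2 * L n" for n unfolding L_def by simp
      have Lpos: "L n \<ge> 1" for n
      proof -
        have "2^n * M0 \<ge> M0" by simp
        moreover have "M0 \<ge> 1" unfolding M0_def by simp
        ultimately have "2^n * M0 \<ge> 1" by linarith
        then show ?thesis unfolding L_def by simp
      qed
      have dd: "Q (L n) \<le> 5/4 * Q (L (Suc n))" for n
      proof -
        have "2^n * M0 \<ge> M0" by simp
        then have "2^n * M0 \<ge> l0" "2^n * M0 \<ge> 1" unfolding M0_def by linarith+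
        from doub[OF this] show ?thesis unfolding L_def by (simp add: mult.assoc)
      qed
      have grow: "real (L n) * Q (L n) \<ge> (8/5)^n * (real (L 0) * Q (L 0))" for n
      proof (induction n)
        case 0 then show ?case by simp
      next
        case (Suc n)
        have "real (L (Suc n)) * Q (L (Suc n)) \<ge> 8/5 * (real (L n) * Q (L n))"
        proof -
          have e1: "real (L (Suc n)) * Q (L (Suc n)) = 2 * (real (L n) * Q (L (Suc n)))" using LSuc[of n] by simp
          have "real (L n) * (4/5 * Q (L n)) \<le> real (L n) * Q (L (Suc n))"
            using dd[of n] by (intro mult_left_mono) auto
          then have e2: "4/5 * (real (L n) * Q (L n)) \<le> real (L n) * Q (L (Suc n))" by simp
          show ?thesis using e1 e2 by linarith
        qed
        moreover have "8/5 * (real (L n) * Q (L n)) \<ge> 8/5 * ((8/5)^n * (real (L 0) * Q (L 0)))"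
          using Suc.IH by (intro mult_left_mono) auto
        moreover have "(8/5::real)^Suc n * (real (L 0) * Q (L 0)) = 8/5 * ((8/5)^n * (real (L 0) * Q (L 0)))"
          by simp
        ultimately show ?case by linarith
      qed
      have Fb: "F (L n) \<le> F (L 0) + 3 * real (L n) * Q (L n)" for n
      proof (induction n)
        case 0 then show ?case using pos[of "L 0"] by simp
      next
        case (Suc n)
        have "F (L (Suc n)) = F (L n) + (\<Sum>i=L n..<2 * L n. Q i)"
          unfolding F_def LSuc using Lpos[of n] by (subst sum.atLeastLessThan_concat[symmetric]) auto
        also have "(\<Sum>i=L n..<2 * L n. Q i) \<le> (\<Sum>i=L n..<2 * L n. Q (L n))"
          by (intro sum_mono mono) auto
        also have "\<dots> = real (L n) * Q (L n)" by simp
        finally have "F (L (Suc n)) \<le> F (L 0) + 4 * real (L n) * Q (L n)" using Suc.IH by simp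
        also have "4 * real (L n) * Q (L n) \<le> 4 * real (L n) * (5/4 * Q (L (Suc n)))"
          using dd[of n] by (intro mult_left_mono) auto
        also have "\<dots> \<le> 3 * real (L (Suc n)) * Q (L (Suc n))"
          using LSuc[of n] pos[of "L (Suc n)"] by simp
        finally show ?case by simp
      qed
      have Lgt: "L n > l0" for n
      proof -
        have "2^n * M0 \<ge> M0" by simp
        then show ?thesis unfolding L_def M0_def by linarith
      qed
      have bound: "9 * (real (L n) * Q (L n)) < F (L 0)" for n
      proof -
        have "C * real (L n) * Q (L n) < B (L n)" using hyp[OF Lgt Lpos] .
        also have "\<dots> \<le> F (L n)" using BF Lpos by blast
        also have "\<dots> \<le> F (L 0) + 3 * real (L n) * Q (L n)" using Fb .
        finally have "C * real (L n) * Q (L n) < F (L 0) + 3 * real (L n) * Q (L n)" .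
        moreover have "12 * (real (L n) * Q (L n)) \<le> C * (real (L n) * Q (L n))"
          using C12 pos[of "L n"] by (intro mult_right_mono) auto
        ultimately show ?thesis by (simp add: mult.assoc)
      qed
      have pos0: "real (L 0) * Q (L 0) > 0" using Lpos[of 0] pos[of "L 0"] by simp
      obtain n where n: "F (L 0) / (9 * (real (L 0) * Q (L 0))) < (8/5)^n"
        using real_arch_pow[of "8/5::real"] by auto
      then have "F (L 0) < 9 * ((8/5)^n * (real (L 0) * Q (L 0)))"
        using pos0 by (simp add: field_simps)
      also have "\<dots> \<le> 9 * (real (L n) * Q (L n))" using grow[of n] by simp
      finally show False using bound[of n] by simp
    qed
  qed
qed


theorem lemma6p5:
  fixes p :: real
  assumes "0 < p" and "p < 1"
  shows "\<exists>C > 0. infinite {l :: nat. l \<ge> 1 \<and>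
           (\<Sum>i = 1..<l. real i * q p i) \<le> C * real l * Q p l}"
proof -
  have p0: "0 \<le> p" and p1: "p \<le> 1" using assms by auto
  have Qe: "Q p k = QQ p k" for k
    by (simp add: Q_def QQ_def[OF p0 p1] LIS_lis)
  have qe: "q p k = QQ p k - QQ p (Suc k)" for k
    using qq_QQ[OF p0 p1, of k] by (simp add: q_def qq_def[OF p0 p1] LIS_lis)
  have H: "p * (\<Sum>j\<in>{1..<k}. (QQ p j - QQ p (Suc j)) * (QQ p (k-j) - QQ p k)) \<le> (QQ p k)^2"
    if "k \<ge> 2" for k
    using identity[OF p0 p1 that] qq_QQ[OF p0 p1] by simp
  obtain C where C: "C > 0" "infinite {l::nat. l \<ge> 1 \<and> (\<Sum>i=1..<l. real i * (QQ p i - QQ p (Suc i))) \<le> C * real l * QQ p l}"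
    using analysis[of p "QQ p", OF assms(1) QQ_dec[OF p0 p1] QQ_pos[OF p0 p1 assms] H] by blast
  show ?thesis
    using C by (intro exI[of _ C]) (simp add: Qe qe)
qed

end
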